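(* Let $n\ge1$ and let $\varphi\colon A\to B$ be a Frobenius $n$-homomorphism. Then $\psi_n(ab)=\psi_n(a)\psi_n(b)$ for all $a,b\in A$, where $\psi_n(a)$ is the coefficient of $z^n$ in $R_\varphi(a,z)$ (equivalently $\psi_n(a)=\frac1{n!}\Phi_n(a,\dots,a)$).
   Context: $\mathbb{K}=\mathbb{R}$ or $\mathbb{C}$; $A$ and $B$ are commutative associative unital $\mathbb{K}$-algebras. For a $\mathbb{K}$-linear map $\varphi\colon A\to B$ and $a\in A$, the characteristic function is $R_\varphi(a,z)=\exp\bigl(\varphi(\ln(1+az))\bigr)=1+\sum_{k\ge1}\psi_k(a)z^k\in B[[z]]$, with $\ln(1+az)=\sum_{k\ge1}(-1)^{k+1}a^kz^k/k$ and $\varphi$ applied coefficientwise. The Frobenius maps $\Phi_k\colon A^k\to B$ of $\varphi$ are defined by $\Phi_1=\varphi$ and $\Phi_{k+1}(a_1,\dots,a_{k+1})=\varphi(a_1)\Phi_k(a_2,\dots,a_{k+1})-\sum_{j=2}^{k+1}\Phi_k(a_2,\dots,a_{j-1},a_1a_j,a_{j+1},\dots,a_{k+1})$. A linear map $\varphi$ is a (Frobenius) $n$-homomorphism if $\varphi(1)=n\cdot1_B$ and $\Phi_k\equiv0$ for all $k\ge n+1$. *)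

theory Defs
  imports Complex_Main "HOL-Computational_Algebra.Formal_Power_Series"
begin

text \<open>Algebras are modelled as types of class comm_ring_1 and real_algebra_1
  (commutative associative unital real algebras); linearity is real linearity.\<close>

definition ln1p_fps :: "'a::{comm_ring_1,real_algebra_1} \<Rightarrow> 'a fps" where
  "ln1p_fps a = Abs_fps (\<lambda>k. if k = 0 then 0
      else ((-1) ^ (k + 1) / real k) *\<^sub>R a ^ k)"

definition fps_map :: "('a \<Rightarrow> 'b) \<Rightarrow> 'a fps \<Rightarrow> 'b::zero fps" where
  "fps_map f F = Abs_fps (\<lambda>k. f (fps_nth F k))"

text \<open>Exponential of a power series with zero constant term:
  exp F = sum over m of F^m / m!; only m \<le> k contributes to the coefficient of z^k.\<close>
definition fps_exp0 :: "'b::{comm_ring_1,real_algebra_1} fps \<Rightarrow> 'b fps" where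
  "fps_exp0 F = Abs_fps (\<lambda>k. \<Sum>m\<le>k. (1 / fact m) *\<^sub>R fps_nth (F ^ m) k)"

definition char_fun :: "('a::{comm_ring_1,real_algebra_1} \<Rightarrow> 'b::{comm_ring_1,real_algebra_1})
    \<Rightarrow> 'a \<Rightarrow> 'b fps" where
  "char_fun \<phi> a = fps_exp0 (fps_map \<phi> (ln1p_fps a))"

definition psi :: "('a::{comm_ring_1,real_algebra_1} \<Rightarrow> 'b::{comm_ring_1,real_algebra_1})
    \<Rightarrow> nat \<Rightarrow> 'a \<Rightarrow> 'b" where
  "psi \<phi> k a = fps_nth (char_fun \<phi> a) k"

text \<open>Frobenius maps: frob phi [a1,...,ak] = Phi_k(a1,...,ak) (value on [] is irrelevant).\<close>
function frob :: "('a::comm_ring_1 \<Rightarrow> 'b::comm_ring_1) \<Rightarrow> 'a list \<Rightarrow> 'b" where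
  "frob \<phi> [] = 0"
| "frob \<phi> [a] = \<phi> a"
| "frob \<phi> (a # b # cs) =
     \<phi> a * frob \<phi> (b # cs)
     - (\<Sum>j<length (b # cs). frob \<phi> ((b # cs)[j := a * (b # cs) ! j]))"
  by pat_completeness auto
termination
  by (relation "measure (\<lambda>(\<phi>, xs). length xs)") (auto split: nat.split)

definition frobenius_hom :: "nat \<Rightarrow> ('a::{comm_ring_1,real_algebra_1} \<Rightarrow> 'b::{comm_ring_1,real_algebra_1}) \<Rightarrow> bool" where
  "frobenius_hom n \<phi> \<longleftrightarrow> linear \<phi> \<and> \<phi> 1 = of_nat n \<and>
     (\<forall>k\<ge>n + 1. \<forall>xs. length xs = k \<longrightarrow> frob \<phi> xs = 0)"

end

theory Submission
  imports Defs
begin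

unbundle fps_syntax

lemma frob_step:
  fixes \<phi> :: "'a::{comm_ring_1,real_algebra_1} \<Rightarrow> 'b::{comm_ring_1,real_algebra_1}"
  assumes "frobenius_hom n \<phi>" "n \<ge> 1" "length ys = n"
  shows "\<phi> x * frob \<phi> ys = (\<Sum>j<n. frob \<phi> (ys[j := x * ys!j]))"
proof -
  obtain y ys' where ys: "ys = y # ys'" using assms(2,3) by (cases ys) auto
  have "frob \<phi> (x # ys) = 0" using assms(1,3) unfolding frobenius_hom_def by auto
  moreover have "frob \<phi> (x # ys) = \<phi> x * frob \<phi> ys - (\<Sum>j<length ys. frob \<phi> (ys[j := x * ys!j]))"
    unfolding ys by (rule frob.simps(3))
  ultimately show ?thesis using assms(3) by simp
qed

lemma frob_ones:
  fixes \<phi> :: "'a::{comm_ring_1,real_algebra_1} \<Rightarrow> 'b::{comm_ring_1,real_algebra_1}"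
  assumes "\<phi> 1 = of_nat n"
  shows "m \<ge> 1 \<Longrightarrow> m \<le> n \<Longrightarrow> frob \<phi> (replicate m 1) = of_nat (\<Prod>i<m. n - i)"
proof (induction m rule: nat_induct_at_least)
  case base
  then show ?case using assms by simp
next
  case (Suc m)
  obtain m' where m': "m = Suc m'" using Suc(1) by (cases m) auto
  have "frob \<phi> (replicate (Suc m) 1) = \<phi> 1 * frob \<phi> (replicate m 1) - (\<Sum>j<m. frob \<phi> (replicate m 1))"
    using m' by (simp add: frob.simps(3)[of \<phi> 1 1 "replicate m' 1", simplified])
  also have "\<dots> = (of_nat n - of_nat m) * of_nat (\<Prod>i<m. n - i)"
    using Suc assms by (simp add: algebra_simps)
  also have "\<dots> = of_nat ((n - m) * (\<Prod>i<m. n - i))"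
    using Suc by (simp add: of_nat_diff)
  finally show ?case by (simp add: mult.commute)
qed

lemma prod_fact: "(\<Prod>i<n. n - i) = fact n"
  using fact_prod_rev[of n, where 'a=nat] by (simp add: atLeast0LessThan)

definition Sets :: "nat \<Rightarrow> nat \<Rightarrow> nat set set" where
  "Sets n m = {S. S \<subseteq> {..<n} \<and> card S = m}"

lemma finite_Sets[simp]: "finite (Sets n m)"
  unfolding Sets_def by (rule finite_subset[of _ "Pow {..<n}"]) auto

lemma fin_sub: "S \<subseteq> {..<n::nat} \<Longrightarrow> finite S"
  by (meson finite_lessThan finite_subset)

lemma Sets_0[simp]: "Sets n 0 = {{}}"
  unfolding Sets_def by (auto dest: fin_sub)

lemma Sets_n[simp]: "Sets n n = {{..<n}}"
proof -
  have "S = {..<n}" if "S \<subseteq> {..<n}" "card S = n" for S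
    using card_subset_eq[OF finite_lessThan that(1)] that(2) by simp
  then show ?thesis unfolding Sets_def by auto
qed

definition GG :: "((nat \<Rightarrow> nat) \<Rightarrow> 'b) \<Rightarrow> (nat \<Rightarrow> nat) \<Rightarrow> nat set \<Rightarrow> nat \<Rightarrow> nat \<Rightarrow> 'b" where
  "GG H c S j i = H (\<lambda>l. (c l + (if l \<in> S then 1 else 0)) + (if l = j then i else 0))"

definition ee :: "((nat \<Rightarrow> nat) \<Rightarrow> 'b::comm_ring_1) \<Rightarrow> nat \<Rightarrow> nat \<Rightarrow> (nat \<Rightarrow> nat) \<Rightarrow> 'b" where
  "ee H n m c = (\<Sum>S\<in>Sets n m. H (\<lambda>l. c l + (if l \<in> S then 1 else 0)))"

definition FF :: "((nat \<Rightarrow> nat) \<Rightarrow> 'b::comm_ring_1) \<Rightarrow> nat \<Rightarrow> (nat \<Rightarrow> nat) \<Rightarrow> nat \<Rightarrow> nat \<Rightarrow> 'b" where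
  "FF H n c m i = (\<Sum>S\<in>Sets n m. \<Sum>j\<in>{..<n} - S. GG H c S j i)"

definition BB :: "((nat \<Rightarrow> nat) \<Rightarrow> 'b::comm_ring_1) \<Rightarrow> nat \<Rightarrow> (nat \<Rightarrow> nat) \<Rightarrow> nat \<Rightarrow> nat \<Rightarrow> 'b" where
  "BB H n c m i = (\<Sum>S\<in>Sets n m. \<Sum>j\<in>S. GG H c S j i)"

lemma GG_insert: "j \<notin> S \<Longrightarrow> GG H c (insert j S) j i = GG H c S j (Suc i)"
  unfolding GG_def by (rule arg_cong[where f=H]) auto

lemma FF_BB: "FF H n c m (Suc i) = BB H n c (Suc m) i"
proof -
  have "FF H n c m (Suc i) = (\<Sum>(S,j)\<in>Sigma (Sets n m) (\<lambda>S. {..<n} - S). GG H c S j (Suc i))"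
    unfolding FF_def by (rule sum.Sigma) auto
  also have "\<dots> = (\<Sum>(S,j)\<in>Sigma (Sets n (Suc m)) (\<lambda>S. S). GG H c S j i)"
  proof (rule sum.reindex_bij_witness[where i="\<lambda>(S,j). (S - {j}, j)" and j="\<lambda>(S,j). (insert j S, j)"])
    fix a assume a: "a \<in> Sigma (Sets n (Suc m)) (\<lambda>S. S)"
    then obtain S j where [simp]: "a = (S,j)" and S: "S \<in> Sets n (Suc m)" "j \<in> S" by auto
    have fS: "finite S" using S unfolding Sets_def by (auto intro: finite_subset)
    show "(\<lambda>(S, j). (insert j S, j)) ((\<lambda>(S, j). (S - {j}, j)) a) = a" using S by auto
    show "(\<lambda>(S, j). (S - {j}, j)) a \<in> Sigma (Sets n m) (\<lambda>S. {..<n} - S)"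
      using S fS unfolding Sets_def by auto
  next
    fix a assume a: "a \<in> Sigma (Sets n m) (\<lambda>S. {..<n} - S)"
    then obtain S j where [simp]: "a = (S,j)" and S: "S \<in> Sets n m" "j < n" "j \<notin> S" by auto
    have fS: "finite S" using S unfolding Sets_def by (auto intro: finite_subset)
    show "(\<lambda>(S, j). (S - {j}, j)) ((\<lambda>(S, j). (insert j S, j)) a) = a" using S by auto
    show "(\<lambda>(S, j). (insert j S, j)) a \<in> Sigma (Sets n (Suc m)) (\<lambda>S. S)"
      using S fS unfolding Sets_def by auto
    show "(case (\<lambda>(S, j). (insert j S, j)) a of (S, j) \<Rightarrow> GG H c S j i) =
          (case a of (S, j) \<Rightarrow> GG H c S j (Suc i))"
      using S by (simp add: GG_insert)
  qed
  also have "\<dots> = BB H n c (Suc m) i"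
    unfolding BB_def by (rule sum.Sigma[symmetric]) (auto simp: Sets_def intro: finite_subset)
  finally show ?thesis .
qed

lemma BB_0: "BB H n c 0 i = 0"
  unfolding BB_def by simp

lemma BB_ee: "BB H n c k 0 = of_nat k * ee H n k c"
  unfolding BB_def ee_def sum_distrib_left
  by (rule sum.cong) (auto simp: GG_def Sets_def)

lemma A_FB:
  assumes hyp: "\<And>c i. i \<ge> 1 \<Longrightarrow> (\<Sum>j<n. H (\<lambda>l. c l + (if l = j then i else 0))) = y i * H c"
    and "i \<ge> 1"
  shows "y i * ee H n m c = FF H n c m i + BB H n c m i"
proof -
  have "y i * ee H n m c = (\<Sum>S\<in>Sets n m. \<Sum>j<n. GG H c S j i)"
    unfolding ee_def sum_distrib_left GG_def
    by (rule sum.cong[OF refl], rule hyp[symmetric, OF assms(2)])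
  also have "\<dots> = (\<Sum>S\<in>Sets n m. (\<Sum>j\<in>{..<n} - S. GG H c S j i) + (\<Sum>j\<in>S. GG H c S j i))"
    by (rule sum.cong[OF refl], rule sum.subset_diff) (auto simp: Sets_def)
  finally show ?thesis unfolding FF_def BB_def sum.distrib .
qed

lemma telescope:
  fixes T :: "nat \<Rightarrow> 'b::comm_ring_1"
  shows "(\<Sum>i\<in>{1..r}. (-1)^(i-1) * (T i + T (Suc i))) = T 1 - (-1)^r * T (Suc r)"
proof (induction r)
  case 0 then show ?case by simp
next
  case (Suc r)
  have "(\<Sum>i\<in>{1..Suc r}. (-1)^(i-1) * (T i + T (Suc i))) =
        (\<Sum>i\<in>{1..r}. (-1)^(i-1) * (T i + T (Suc i))) + (-1)^r * (T (Suc r) + T (Suc (Suc r)))"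
    by (simp add: sum.atLeast1_atMost_eq sum.lessThan_Suc)
  then show ?case using Suc by (simp add: algebra_simps)
qed

lemma newton_ops:
  assumes hyp: "\<And>c i. i \<ge> 1 \<Longrightarrow> (\<Sum>j<n. H (\<lambda>l. c l + (if l = j then i else 0))) = y i * H c"
    and k: "k \<ge> 1"
  shows "of_nat k * ee H n k c = (\<Sum>i\<in>{1..k}. (-1)^(i-1) * (y i * ee H n (k-i) c))"
proof -
  define T where "T i = FF H n c (k - i) i" for i
  have mid: "y i * ee H n (k-i) c = T i + T (Suc i)" if "1 \<le> i" "i < k" for i
  proof -
    have "BB H n c (k-i) i = BB H n c (Suc (k - Suc i)) i" using that by (simp add: Suc_diff_Suc)
    also have "\<dots> = T (Suc i)" unfolding T_def by (simp add: FF_BB)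
    finally show ?thesis using A_FB[OF hyp that(1)] unfolding T_def by simp
  qed
  have last: "y k * ee H n 0 c = T k" using A_FB[OF hyp k] by (simp add: T_def BB_0)
  have "{1..k} = insert k {1..k-1}" using k by auto
  then have "(\<Sum>i\<in>{1..k}. (-1)^(i-1) * (y i * ee H n (k-i) c)) =
      (-1)^(k-1) * (y k * ee H n 0 c) + (\<Sum>i\<in>{1..k-1}. (-1)^(i-1) * (y i * ee H n (k-i) c))"
    using k by simp
  also have "(\<Sum>i\<in>{1..k-1}. (-1)^(i-1) * (y i * ee H n (k-i) c)) =
      (\<Sum>i\<in>{1..k-1}. (-1)^(i-1) * (T i + T (Suc i)))"
    by (rule sum.cong) (auto simp: mid)
  also have "\<dots> = T 1 - (-1)^(k-1) * T (Suc (k-1))" by (rule telescope)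
  finally have "(\<Sum>i\<in>{1..k}. (-1)^(i-1) * (y i * ee H n (k-i) c)) = T 1"
    using k last by simp
  also have "T 1 = of_nat k * ee H n k c"
    unfolding T_def using k by (metis FF_BB BB_ee One_nat_def Suc_diff_1 less_le_trans zero_less_one)
  finally show ?thesis by simp
qed

lemma ee_eq:
  fixes H :: "(nat \<Rightarrow> nat) \<Rightarrow> 'b::{comm_ring_1,real_algebra_1}"
  assumes hyp: "\<And>c i. i \<ge> 1 \<Longrightarrow> (\<Sum>j<n. H (\<lambda>l. c l + (if l = j then i else 0))) = y i * H c"
    and q0: "q 0 = 1"
    and qrec: "\<And>k. k \<ge> 1 \<Longrightarrow> of_nat k * q k = (\<Sum>i\<in>{1..k}. (-1)^(i-1) * (y i * q (k-i)))"
  shows "ee H n k c = q k * H c"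
proof (induction k rule: less_induct)
  case (less k)
  show ?case
  proof (cases "k = 0")
    case True
    then show ?thesis by (simp add: ee_def q0)
  next
    case False
    then have k: "k \<ge> 1" by simp
    have "of_nat k * ee H n k c = (\<Sum>i\<in>{1..k}. (-1)^(i-1) * (y i * ee H n (k-i) c))"
      by (rule newton_ops[OF hyp k])
    also have "\<dots> = (\<Sum>i\<in>{1..k}. (-1)^(i-1) * (y i * q (k-i))) * H c"
      unfolding sum_distrib_right
      by (rule sum.cong[OF refl]) (simp add: less.IH mult.assoc)
    also have "\<dots> = of_nat k * (q k * H c)" by (simp only: qrec[OF k, symmetric] mult.assoc)
    finally show ?thesis
    proof -
      assume "of_nat k * ee H n k c = of_nat k * (q k * H c)"
      then have "real k *\<^sub>R ee H n k c = real k *\<^sub>R (q k * H c)"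
        by (simp add: scaleR_conv_of_real of_real_of_nat_eq)
      then show ?thesis using False by simp
    qed
  qed
qed

lemma ee_top: "ee H n n c = H (\<lambda>l. c l + (if l < n then 1 else 0))"
  unfolding ee_def by simp

lemma of_nat_as_scaleR:
  fixes v :: "'b::{comm_ring_1,real_algebra_1}"
  shows "of_nat j * v = real j *\<^sub>R v"
  by (simp add: scaleR_conv_of_real)

lemma of_nat_scaleR':
  fixes v :: "'b::{comm_ring_1,real_algebra_1}"
  shows "of_nat j * (r *\<^sub>R v) = (real j * r) *\<^sub>R v"
proof -
  have "of_nat j * (r *\<^sub>R v) = r *\<^sub>R (of_nat j * v)" by (rule mult_scaleR_right)
  also have "\<dots> = r *\<^sub>R (real j *\<^sub>R v)" by (simp only: of_nat_as_scaleR)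
  also have "\<dots> = (real j * r) *\<^sub>R v" by (simp only: scaleR_scaleR mult.commute)
  finally show ?thesis .
qed

lemma neg1_scaleR:
  fixes v :: "'b::{comm_ring_1,real_algebra_1}"
  shows "((-1::real)^i) *\<^sub>R v = (-1)^i * v"
  by (simp add: scaleR_conv_of_real)

lemma of_nat_cancel_ra:
  fixes x z :: "'b::{comm_ring_1,real_algebra_1}"
  assumes "of_nat k * x = of_nat k * z" "k \<noteq> 0"
  shows "x = z"
proof -
  have "real k *\<^sub>R x = real k *\<^sub>R z" using assms(1)
    by (simp add: scaleR_conv_of_real of_real_of_nat_eq)
  then show ?thesis using assms(2) by simp
qed

lemma R_ext:
  fixes F :: "'b::{comm_ring_1,real_algebra_1} fps"
  assumes "F $ 0 = 0" "N \<ge> k"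
  shows "fps_exp0 F $ k = (\<Sum>m\<le>N. (1 / fact m) *\<^sub>R ((F^m) $ k))"
  unfolding fps_exp0_def fps_nth_Abs_fps
  by (rule sum.mono_neutral_left) (use assms startsby_zero_power_prefix[OF assms(1)] in auto)


lemma Fn_lemma:
  fixes \<phi> :: "'a::{comm_ring_1,real_algebra_1} \<Rightarrow> 'b::{comm_ring_1,real_algebra_1}"
  assumes lin: "linear \<phi>"
  shows "fps_map \<phi> (ln1p_fps b) $ j = (if j = 0 then 0 else ((-1)^(j+1) / real j) *\<^sub>R \<phi> (b^j))"
  unfolding fps_map_def ln1p_fps_def using linear_0[OF lin] linear_scale[OF lin] linear_neg[OF lin] by simp

lemma dF_lemma:
  fixes \<phi> :: "'a::{comm_ring_1,real_algebra_1} \<Rightarrow> 'b::{comm_ring_1,real_algebra_1}"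
  assumes lin: "linear \<phi>"
  shows "fps_deriv (fps_map \<phi> (ln1p_fps b)) $ i = (-1)^i * \<phi> (b^(Suc i))"
proof -
  have "fps_deriv (fps_map \<phi> (ln1p_fps b)) $ i = of_nat (Suc i) * (((-1)^(i+2) / real (Suc i)) *\<^sub>R \<phi> (b^(Suc i)))"
    by (simp add: Fn_lemma[OF lin] del: of_nat_Suc)
  also have "\<dots> = (real (Suc i) * ((-1)^(i+2) / real (Suc i))) *\<^sub>R \<phi> (b^(Suc i))"
    by (rule of_nat_scaleR')
  also have "real (Suc i) * ((-1)^(i+2) / real (Suc i)) = (-1::real)^i"
    by (simp add: power_add)
  finally show ?thesis by (simp only: neg1_scaleR)
qed

lemma e_lemma:
  fixes x :: "'b::{comm_ring_1,real_algebra_1}"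
  shows "(1 / fact (Suc m)) *\<^sub>R (of_nat (Suc m) * x) = (1 / fact m) *\<^sub>R x"
proof -
  have r: "1 / fact (Suc m) * real (Suc m) = (1 / fact m :: real)"
    by (simp add: fact_Suc del: of_nat_Suc)
  have "(1 / fact (Suc m)) *\<^sub>R (of_nat (Suc m) * x) = (1 / fact (Suc m)) *\<^sub>R (real (Suc m) *\<^sub>R x)"
    by (simp only: of_nat_as_scaleR)
  also have "\<dots> = (1 / fact (Suc m) * real (Suc m)) *\<^sub>R x" by (simp only: scaleR_scaleR)
  finally show ?thesis by (simp only: r)
qed

lemma psi_newton:
  fixes \<phi> :: "'a::{comm_ring_1,real_algebra_1} \<Rightarrow> 'b::{comm_ring_1,real_algebra_1}"
  assumes lin: "linear \<phi>" and k: "k \<ge> 1"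
  shows "of_nat k * psi \<phi> k b = (\<Sum>i\<in>{1..k}. (-1)^(i-1) * (\<phi> (b^i) * psi \<phi> (k-i) b))"
proof -
  define F where "F = fps_map \<phi> (ln1p_fps b)"
  define R where "R = fps_exp0 F"
  have F0: "F $ 0 = 0" unfolding F_def by (simp add: Fn_lemma[OF lin])
  have dF: "fps_deriv F $ i = (-1)^i * \<phi> (b^(Suc i))" for i
    unfolding F_def by (rule dF_lemma[OF lin])
  obtain k' where k': "k = Suc k'" using k by (cases k) auto
  have "of_nat k * R $ k = of_nat (Suc k') * (\<Sum>m\<le>Suc k'. (1 / fact m) *\<^sub>R ((F^m) $ (Suc k')))"
    unfolding R_def k' by (rule arg_cong[where f="\<lambda>x. of_nat (Suc k') * x"], rule R_ext[OF F0 order_refl])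
  also have "\<dots> = (\<Sum>m\<le>Suc k'. (1 / fact m) *\<^sub>R (of_nat (Suc k') * (F^m) $ (Suc k')))"
    by (simp only: sum_distrib_left mult_scaleR_right)
  also have "\<dots> = (\<Sum>m\<le>Suc k'. (1 / fact m) *\<^sub>R ((fps_deriv (F^m)) $ k'))"
    by (simp only: fps_deriv_nth Suc_eq_plus1)
  also have "\<dots> = (\<Sum>m\<le>Suc k'. (1 / fact m) *\<^sub>R (of_nat m * (fps_deriv F * F^(m-1)) $ k'))"
    by (intro sum.cong refl) (simp add: fps_deriv_power fps_mult_left_const_nth mult.assoc)
  also have "\<dots> = (\<Sum>m\<le>k'. (1 / fact m) *\<^sub>R ((fps_deriv F * F^m) $ k'))"
  proof -
    note e = e_lemma
    show ?thesis
      by (subst sum.atMost_Suc_shift) (simp only: e diff_Suc_1 of_nat_0 mult_zero_left scaleR_zero_right add_0_left)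
  qed
  also have "\<dots> = (\<Sum>m\<le>k'. \<Sum>i=0..k'. fps_deriv F $ i * ((1 / fact m) *\<^sub>R ((F^m) $ (k' - i))))"
    by (intro sum.cong refl) (simp only: fps_mult_nth scaleR_sum_right mult_scaleR_right)
  also have "\<dots> = (\<Sum>i=0..k'. fps_deriv F $ i * (\<Sum>m\<le>k'. (1 / fact m) *\<^sub>R ((F^m) $ (k' - i))))"
    by (subst sum.swap) (simp only: sum_distrib_left)
  also have "\<dots> = (\<Sum>i=0..k'. fps_deriv F $ i * R $ (k' - i))"
    unfolding R_def by (intro sum.cong refl arg_cong[where f="\<lambda>x. _ * x"] R_ext[OF F0, symmetric]) auto
  also have "\<dots> = (\<Sum>i=0..k'. (-1)^i * (\<phi> (b^(Suc i)) * R $ (k' - i)))"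
    by (simp only: dF mult.assoc)
  also have "\<dots> = (\<Sum>i\<in>{1..k}. (-1)^(i-1) * (\<phi> (b^i) * R $ (k-i)))"
    by (simp only: k' One_nat_def sum.shift_bounds_cl_Suc_ivl) simp
  finally have "of_nat k * R $ k = (\<Sum>i\<in>{1..k}. (-1)^(i-1) * (\<phi> (b^i) * R $ (k-i)))" .
  then show ?thesis unfolding psi_def char_fun_def R_def F_def .
qed


lemma eigen:
  fixes \<phi> :: "'a::{comm_ring_1,real_algebra_1} \<Rightarrow> 'b::{comm_ring_1,real_algebra_1}"
  assumes hom: "frobenius_hom n \<phi>" and n1: "n \<ge> 1" and len: "length xs = n"
  shows "frob \<phi> (map (\<lambda>x. x * b) xs) = psi \<phi> n b * frob \<phi> xs"
proof -
  define H where "H c = frob \<phi> (map (\<lambda>j. xs!j * b^(c j)) [0..<n])" for c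
  have lin: "linear \<phi>" using hom unfolding frobenius_hom_def by simp
  have hyp: "(\<Sum>j<n. H (\<lambda>l. c l + (if l = j then i else 0))) = \<phi> (b^i) * H c" if "i \<ge> 1" for c i
  proof -
    let ?ys = "map (\<lambda>j. xs!j * b^(c j)) [0..<n]"
    have "\<phi> (b^i) * frob \<phi> ?ys = (\<Sum>j<n. frob \<phi> (?ys[j := b^i * ?ys!j]))"
      by (rule frob_step[OF hom n1]) simp
    moreover have "?ys[j := b^i * ?ys!j] = map (\<lambda>l. xs!l * b^(c l + (if l = j then i else 0))) [0..<n]"
      if "j < n" for j
      using that by (intro nth_equalityI) (auto simp: nth_list_update power_add algebra_simps)
    ultimately show ?thesis unfolding H_def by simp
  qed
  have q0: "psi \<phi> 0 b = 1"
    unfolding psi_def char_fun_def fps_exp0_def by simp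
  have "ee H n n (\<lambda>l. 0) = psi \<phi> n b * H (\<lambda>l. 0)"
    by (rule ee_eq[where y="\<lambda>i. \<phi> (b^i)" and q="\<lambda>k. psi \<phi> k b", OF hyp q0 psi_newton[OF lin]])
  moreover have "H (\<lambda>l. 0) = frob \<phi> xs"
    unfolding H_def using len by (intro arg_cong[where f="frob \<phi>"] nth_equalityI) auto
  moreover have "ee H n n (\<lambda>l. 0) = frob \<phi> (map (\<lambda>x. x * b) xs)"
    unfolding ee_top H_def using len by (intro arg_cong[where f="frob \<phi>"] nth_equalityI) auto
  ultimately show ?thesis by simp
qed

theorem mainTheorem7:
  fixes \<phi> :: "'a::{comm_ring_1,real_algebra_1} \<Rightarrow> 'b::{comm_ring_1,real_algebra_1}"
    and n :: nat
  assumes "n \<ge> 1"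
    and "frobenius_hom n \<phi>"
  shows "\<forall>a b. psi \<phi> n (a * b) = psi \<phi> n a * psi \<phi> n b"
proof (intro allI)
  fix a b :: 'a
  have one: "\<phi> 1 = of_nat n" using assms(2) unfolding frobenius_hom_def by simp
  have K: "frob \<phi> (replicate n 1) = of_nat (fact n)"
    using frob_ones[of \<phi> n n, OF one assms(1)] prod_fact by simp
  have e1: "frob \<phi> (replicate n b) = psi \<phi> n b * of_nat (fact n)"
    using eigen[OF assms(2,1), of "replicate n 1" b] K by simp
  have e2: "frob \<phi> (replicate n (a * b)) = psi \<phi> n (a * b) * of_nat (fact n)"
    using eigen[OF assms(2,1), of "replicate n 1" "a * b"] K by simp
  have e3: "frob \<phi> (replicate n (b * a)) = psi \<phi> n a * frob \<phi> (replicate n b)"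
    using eigen[OF assms(2,1), of "replicate n b" a] by simp
  have "of_nat (fact n) * psi \<phi> n (a * b) = of_nat (fact n) * (psi \<phi> n a * psi \<phi> n b)"
    using e1 e2 e3 by (simp add: mult.commute mult.left_commute)
  then show "psi \<phi> n (a * b) = psi \<phi> n a * psi \<phi> n b"
    by (rule of_nat_cancel_ra) simp
qed

end
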